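(* Let $C\subseteq\mathbb R^d$ be a full-dimensional pointed cone, let $\Gamma$ be the set of points of $C$ lying outside some (possibly empty) truncation of $C$, let $V$ be a countable subset of $C$, and set $U=V+\Gamma$. Then the boundary $\partial U=\overline U\setminus U^\circ$ has Lebesgue measure zero.
   Context: A cone is a subset of $\mathbb R^d$ closed under nonnegative real linear combinations; full-dimensional means nonempty interior; pointed means closed and there is $\mathbf b$ with $\langle\mathbf u,\mathbf b\rangle>0$ for all nonzero $\mathbf u$ in the cone. For such $\mathbf b$ and real $\alpha\ge0$, $H=\{\mathbf u:\langle\mathbf u,\mathbf b\rangle<\alpha\}$ is a truncating halfspace and $C\cap H$ is a truncation of $C$ (empty when $\alpha=0$); $\Gamma=C\setminus H$. $V+\Gamma$ is the Minkowski sum; $\overline U$ and $U^\circ$ denote closure and interior. *)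

theory Defs
  imports "HOL-Analysis.Analysis"
begin

definition nn_cone :: "'a::euclidean_space set \<Rightarrow> bool" where
  "nn_cone C \<longleftrightarrow> (\<forall>u\<in>C. \<forall>v\<in>C. \<forall>a b::real. a \<ge> 0 \<longrightarrow> b \<ge> 0 \<longrightarrow> a *\<^sub>R u + b *\<^sub>R v \<in> C)"

definition full_dimensional :: "'a::euclidean_space set \<Rightarrow> bool" where
  "full_dimensional C \<longleftrightarrow> interior C \<noteq> {}"

definition pointing_vector :: "'a::euclidean_space set \<Rightarrow> 'a \<Rightarrow> bool" where
  "pointing_vector C b \<longleftrightarrow> (\<forall>u\<in>C. u \<noteq> 0 \<longrightarrow> inner u b > 0)"

definition pointed_cone :: "'a::euclidean_space set \<Rightarrow> bool" where
  "pointed_cone C \<longleftrightarrow> nn_cone C \<and> closed C \<and> (\<exists>b. pointing_vector C b)"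

definition truncating_halfspace :: "'a::euclidean_space set \<Rightarrow> 'a set \<Rightarrow> bool" where
  "truncating_halfspace C H \<longleftrightarrow>
     (\<exists>b (\<alpha>::real). pointing_vector C b \<and> \<alpha> \<ge> 0 \<and> H = {u. inner u b < \<alpha>})"

definition minkowski_sum :: "'a::euclidean_space set \<Rightarrow> 'a set \<Rightarrow> 'a set" where
  "minkowski_sum A B = {a + b | a b. a \<in> A \<and> b \<in> B}"

end

theory Submission
  imports Defs
begin

lemma compact_null:
  fixes K :: "'a::euclidean_space set"
  assumes "compact K" and disj: "\<And>x t. x \<in> K \<Longrightarrow> t > 0 \<Longrightarrow> x + t *\<^sub>R e \<notin> K"
  shows "K \<in> null_sets lebesgue"
proof -
  have Km: "K \<in> lmeasurable" using assms(1) by (rule lmeasurable_compact)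
  obtain R where "\<forall>x\<in>K. norm x \<le> R" using compact_imp_bounded[OF assms(1)] bounded_pos by metis
  then have R: "K \<subseteq> cball 0 R" by (auto simp: mem_cball_0)
  define m where "m = measure lebesgue K"
  define B where "B = measure lebesgue (cball (0::'a) (R + norm e))"
  have bound: "real N * m \<le> B" if "N > 0" for N :: nat
  proof -
    define f where "f k = (+) ((real k / real N) *\<^sub>R e) ` K" for k :: nat
    have fm: "f k \<in> lmeasurable" for k unfolding f_def by (rule measurable_translation[OF Km])
    have pw: "pairwise (\<lambda>x y. negligible (f x \<inter> f y)) {..<N}"
    proof (clarsimp simp: pairwise_def)
      fix i j :: nat assume "i \<noteq> j"
      have "f i \<inter> f j = {}" if "i < j" for i j :: nat
      proof (rule ccontr)
        assume "f i \<inter> f j \<noteq> {}"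
        then obtain x y where x: "x \<in> K" and y: "y \<in> K" and eq: "(real i / real N) *\<^sub>R e + x = (real j / real N) *\<^sub>R e + y"
          unfolding f_def by auto
        have "x = y + (real j / real N - real i / real N) *\<^sub>R e" using eq by (simp add: algebra_simps)
        moreover have "real j / real N - real i / real N > 0" using that \<open>N > 0\<close> by (simp add: divide_strict_right_mono)
        ultimately show False using disj[OF y] x by metis
      qed
      then show "negligible (f i \<inter> f j)" using \<open>i \<noteq> j\<close>
        by (metis inf_commute linorder_neqE_nat negligible_empty)
    qed
    have "measure lebesgue (\<Union>(f ` {..<N})) = (\<Sum>k<N. measure lebesgue (f k))"
      by (rule measure_negligible_finite_Union_image[OF _ fm pw]) auto
    also have "\<dots> = real N * m" unfolding f_def m_def measure_translation by simp
    finally have eqN: "measure lebesgue (\<Union>(f ` {..<N})) = real N * m" .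
    have sub: "\<Union>(f ` {..<N}) \<subseteq> cball 0 (R + norm e)"
    proof clarsimp
      fix k x assume "k < N" and "x \<in> f k"
      then obtain y where y: "y \<in> K" and x: "x = (real k / real N) *\<^sub>R e + y" unfolding f_def by auto
      have "norm y \<le> R" using R y by auto
      moreover have "norm ((real k / real N) *\<^sub>R e) \<le> norm e"
      proof -
        have k1: "real k / real N \<le> 1" using \<open>k < N\<close> by simp
        have "norm ((real k / real N) *\<^sub>R e) = (real k / real N) * norm e" by simp
        also have "\<dots> \<le> 1 * norm e" by (rule mult_right_mono[OF k1 norm_ge_zero])
        finally show ?thesis by simp
      qed
      ultimately show "norm x \<le> R + norm e" unfolding x using norm_triangle_ineq[of "(real k / real N) *\<^sub>R e" y] by linarith
    qed
    have "measure lebesgue (\<Union>(f ` {..<N})) \<le> B" unfolding B_def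
      by (rule measure_mono_fmeasurable[OF sub]) (auto intro!: sets.finite_UN fmeasurableD fm)
    then show ?thesis using eqN by simp
  qed
  have "m \<le> 0"
  proof (rule ccontr)
    assume "\<not> m \<le> 0"
    then have mp: "m > 0" by simp
    obtain N :: nat where N: "B / m < real N" using reals_Archimedean2 by blast
    have "B \<ge> 0" unfolding B_def by (rule measure_nonneg)
    then have "B / m \<ge> 0" using mp by simp
    then have "real N > 0" using N by linarith
    then have "N > 0" by simp
    then have "real N * m \<le> B" by (rule bound)
    then show False using N mp by (simp add: divide_less_eq)
  qed
  then have "measure lebesgue K = 0" unfolding m_def using measure_nonneg[of lebesgue K] by linarith
  then show ?thesis using Km negligible_iff_measure0 negligible_iff_null_sets by blast
qed


lemma upper_interior:
  fixes U C :: "'a::euclidean_space set"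
  assumes up: "\<And>y c. y \<in> U \<Longrightarrow> c \<in> C \<Longrightarrow> y + c \<in> U"
    and sc: "\<And>c t. c \<in> C \<Longrightarrow> t \<ge> 0 \<Longrightarrow> t *\<^sub>R c \<in> C"
    and br: "ball e r \<subseteq> C" and "r > 0"
    and x: "x \<in> closure U" and "t > 0"
  shows "x + t *\<^sub>R e \<in> interior U"
proof -
  have "t * r / 2 > 0" using assms by simp
  then obtain y where y: "y \<in> U" and dy: "dist y x < t * r / 2"
    using x closure_approachable by blast
  have "ball (x + t *\<^sub>R e) (t * r / 2) \<subseteq> U"
  proof
    fix z assume z: "z \<in> ball (x + t *\<^sub>R e) (t * r / 2)"
    have n1: "norm (x + t *\<^sub>R e - z) < t * r / 2" using z by (simp add: dist_norm)
    have n2: "norm (y - x) < t * r / 2" using dy by (simp add: dist_norm)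
    have "norm (t *\<^sub>R e - (z - y)) \<le> norm (x + t *\<^sub>R e - z) + norm (y - x)"
      using norm_triangle_ineq[of "x + t *\<^sub>R e - z" "y - x"] by (simp add: algebra_simps)
    then have lt: "norm (t *\<^sub>R e - (z - y)) < t * r" using n1 n2 by linarith
    have "t *\<^sub>R e - (z - y) = t *\<^sub>R (e - (1/t) *\<^sub>R (z - y))" using \<open>t > 0\<close> by (simp add: algebra_simps)
    then have "t * norm (e - (1/t) *\<^sub>R (z - y)) < t * r" using lt \<open>t > 0\<close> by simp
    then have "norm (e - (1/t) *\<^sub>R (z - y)) < r" using \<open>t > 0\<close> by simp
    then have "(1/t) *\<^sub>R (z - y) \<in> C" using br by (auto simp: dist_norm)
    then have "t *\<^sub>R ((1/t) *\<^sub>R (z - y)) \<in> C" by (rule sc) (use \<open>t > 0\<close> in simp)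
    then have "z - y \<in> C" using \<open>t > 0\<close> by simp
    then have "y + (z - y) \<in> U" using up y by blast
    then show "z \<in> U" by simp
  qed
  then show ?thesis using \<open>t * r / 2 > 0\<close> mem_interior by blast
qed

theorem mainTheorem12:
  fixes C V H :: "'a::euclidean_space set"
  assumes "nn_cone C" and "full_dimensional C" and "pointed_cone C"
    and "truncating_halfspace C H"
    and "countable V" and "V \<subseteq> C"
  shows "closure (minkowski_sum V (C - H)) - interior (minkowski_sum V (C - H))
           \<in> null_sets lebesgue"
proof -
  obtain b \<alpha> where pb: "pointing_vector C b" and H: "H = {u. inner u b < \<alpha>}"
    using assms(4) unfolding truncating_halfspace_def by blast
  have add: "u + v \<in> C" if "u \<in> C" "v \<in> C" for u v
  proof -
    have "\<forall>a b::real. a \<ge> 0 \<longrightarrow> b \<ge> 0 \<longrightarrow> a *\<^sub>R u + b *\<^sub>R v \<in> C"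
      using assms(1) that unfolding nn_cone_def by blast
    from this[rule_format, of 1 1] show ?thesis by simp
  qed
  have sc: "t *\<^sub>R c \<in> C" if "c \<in> C" "t \<ge> 0" for c t
  proof -
    have "\<forall>a b::real. a \<ge> 0 \<longrightarrow> b \<ge> 0 \<longrightarrow> a *\<^sub>R c + b *\<^sub>R c \<in> C"
      using assms(1) that unfolding nn_cone_def by blast
    from this[rule_format, of t 0] show ?thesis using that by simp
  qed
  obtain e0 where "e0 \<in> interior C" using assms(2) unfolding full_dimensional_def by blast
  then obtain r where "r > 0" and br: "ball e0 r \<subseteq> C"
  proof -
    from \<open>e0 \<in> interior C\<close> obtain r where "r > 0" "ball e0 r \<subseteq> interior C"
      using open_contains_ball open_interior by blast
    then show ?thesis using that interior_subset by blast
  qed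
  define U where "U = minkowski_sum V (C - H)"
  have up: "y + c \<in> U" if yU: "y \<in> U" and cC: "c \<in> C" for y c
  proof -
    obtain v g where v: "v \<in> V" and g: "g \<in> C - H" and y: "y = v + g"
      using yU unfolding U_def minkowski_sum_def by blast
    have "inner c b \<ge> 0" using pb cC unfolding pointing_vector_def
      by (cases "c = 0") (auto intro: less_imp_le)
    then have "g + c \<in> C - H" using g add cC by (auto simp: H inner_add_left)
    moreover have "y + c = v + (g + c)" using y by (simp add: algebra_simps)
    ultimately show ?thesis unfolding U_def minkowski_sum_def using v by blast
  qed
  define F where "F = closure U - interior U"
  have cF: "closed F" unfolding F_def using frontier_closed frontier_def by metis
  have disj: "x + t *\<^sub>R e0 \<notin> F" if "x \<in> F" "t > 0" for x t
    using upper_interior[OF up sc br \<open>r > 0\<close>, of x t] that unfolding F_def by blast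
  have "F = (\<Union>n::nat. F \<inter> cball 0 (real n))"
    using real_arch_simple by (auto simp: mem_cball dist_norm) 
  also have "\<dots> \<in> null_sets lebesgue"
  proof (rule null_sets_UN)
    fix n :: nat
    show "F \<inter> cball 0 (real n) \<in> null_sets lebesgue"
      by (rule compact_null[where e = e0]) (use disj in \<open>auto simp: closed_Int_compact cF\<close>)
  qed
  finally show ?thesis unfolding F_def U_def .
qed

end
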